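(* Let $X,X'$ be i.i.d. random vectors in $\mathbb{R}^m$ and $Y,Y'$ i.i.d. random vectors in $\mathbb{R}^n$ (with $X,Y$ defined on a common probability space). Let $\mu,\nu$ be symmetric Lévy measures on $\mathbb{R}^m\setminus\{0\}$ and $\mathbb{R}^n\setminus\{0\}$ with full support and $\Phi(x)=\int(1-\cos\langle x,s\rangle)\mu(ds)$, $\Psi(y)=\int(1-\cos\langle y,t\rangle)\nu(dt)$. Then $$V^2(X,Y)\le\mathbb{E}\Phi(X-X')\cdot\mathbb{E}\Psi(Y-Y')\le16\,\mathbb{E}\Phi(X)\cdot\mathbb{E}\Psi(Y).$$
   Context: Symmetric Lévy measure on $\mathbb{R}^d\setminus\{0\}$: $\rho(B)=\rho(-B)$ and $\int(1\wedge|r|^2)\rho(dr)<\infty$; full support: positive mass on every nonempty open subset. $V^2(X,Y)=\iint|f_{(X,Y)}(s,t)-f_X(s)f_Y(t)|^2\,\mu(ds)\,\nu(dt)$, $f$ denoting characteristic functions. *)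

theory Defs
  imports "HOL-Probability.Probability"
begin

definition sym_levy_full :: "('a::euclidean_space) measure \<Rightarrow> bool" where
  "sym_levy_full \<mu> \<longleftrightarrow>
     sets \<mu> = sets borel \<and>
     emeasure \<mu> {0} = 0 \<and>
     (\<forall>B \<in> sets borel. emeasure \<mu> (uminus ` B) = emeasure \<mu> B) \<and>
     (\<integral>\<^sup>+ r. ennreal (min 1 (norm r ^ 2)) \<partial>\<mu>) < \<infinity> \<and>
     (\<forall>U. open U \<and> U \<noteq> {} \<and> 0 \<notin> U \<longrightarrow> emeasure \<mu> U > 0)"

definition levy_fn :: "('a::euclidean_space) measure \<Rightarrow> 'a \<Rightarrow> ennreal" where
  "levy_fn \<mu> x = (\<integral>\<^sup>+ s. ennreal (1 - cos (x \<bullet> s)) \<partial>\<mu>)"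

definition char_fun :: "'w measure \<Rightarrow> ('w \<Rightarrow> 'a::euclidean_space) \<Rightarrow> 'a \<Rightarrow> complex" where
  "char_fun M X s = (CLINT w|M. cis (s \<bullet> X w))"

definition char_fun2 :: "'w measure \<Rightarrow> ('w \<Rightarrow> 'a::euclidean_space) \<Rightarrow> ('w \<Rightarrow> 'b::euclidean_space)
    \<Rightarrow> 'a \<Rightarrow> 'b \<Rightarrow> complex" where
  "char_fun2 M X Y s t = (CLINT w|M. cis (s \<bullet> X w + t \<bullet> Y w))"

definition dcov2 :: "'w measure \<Rightarrow> 'a::euclidean_space measure \<Rightarrow> 'b::euclidean_space measure
    \<Rightarrow> ('w \<Rightarrow> 'a) \<Rightarrow> ('w \<Rightarrow> 'b) \<Rightarrow> ennreal" where
  "dcov2 M \<mu> \<nu> X Y =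
     (\<integral>\<^sup>+ s. (\<integral>\<^sup>+ t. ennreal ((cmod (char_fun2 M X Y s t - char_fun M X s * char_fun M Y t))\<^sup>2) \<partial>\<nu>) \<partial>\<mu>)"

end

theory Submission imports Defs begin

lemma cs_real:
  fixes f g :: "'a \<Rightarrow> real"
  assumes i1: "integrable M (\<lambda>x. f x ^ 2)" and i2: "integrable M (\<lambda>x. g x ^ 2)"
    and i3: "integrable M (\<lambda>x. f x * g x)"
  shows "(\<integral>x. f x * g x \<partial>M)^2 \<le> (\<integral>x. f x ^ 2 \<partial>M) * (\<integral>x. g x ^ 2 \<partial>M)"
proof -
  define a where "a = (\<integral>x. f x ^ 2 \<partial>M)"
  define b where "b = (\<integral>x. g x ^ 2 \<partial>M)"
  define c where "c = (\<integral>x. f x * g x \<partial>M)"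
  have q: "0 \<le> a + 2*z*c + z^2*b" for z
  proof -
    have "0 \<le> (\<integral>y. (f y + z * g y)^2 \<partial>M)" by (intro integral_nonneg_AE) auto
    also have "(\<lambda>y. (f y + z * g y)^2) = (\<lambda>y. f y ^2 + (2*z) * (f y * g y) + z^2 * g y ^2)"
      by (auto simp: power2_eq_square algebra_simps)
    also have "(\<integral>y. f y ^2 + (2*z) * (f y * g y) + z^2 * g y ^2 \<partial>M) = a + 2*z*c + z^2*b"
      using i1 i2 i3 by (simp add: a_def b_def c_def)
    finally show ?thesis .
  qed
  have b0: "0 \<le> b" unfolding b_def by (intro integral_nonneg_AE) auto
  show ?thesis
  proof (cases "b = 0")
    case True
    have "c = 0"
    proof (rule ccontr)
      assume "c \<noteq> 0"
      have "0 \<le> a + 2*(-(a+1)/(2*c))*c + (-(a+1)/(2*c))^2*b" by (rule q)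
      with True \<open>c \<noteq> 0\<close> show False by (simp add: field_simps)
    qed
    then show ?thesis using True by (simp add: a_def b_def c_def[symmetric])
  next
    case False
    with b0 have bp: "b > 0" by simp
    have "0 \<le> a + 2*(-c/b)*c + (-c/b)^2*b" by (rule q)
    hence "0 \<le> a - c^2/b" using bp by (simp add: field_simps power2_eq_square)
    hence "c^2 \<le> a * b" using bp by (simp add: field_simps)
    then show ?thesis by (simp add: a_def b_def c_def)
  qed
qed

lemma borel_cis[measurable]: "cis \<in> borel_measurable borel"
  by (intro borel_measurable_continuous_onI continuous_intros)

lemma (in prob_space) integrable_cis:
  assumes [measurable]: "h \<in> borel_measurable M"
  shows "integrable M (\<lambda>w. cis (h w))"
  by (rule integrable_const_bound[where B=1]) auto

lemma (in prob_space) integrable_bdd_real: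
  fixes h :: "_ \<Rightarrow> real"
  assumes [measurable]: "h \<in> borel_measurable M" and "\<And>w. \<bar>h w\<bar> \<le> B"
  shows "integrable M h"
  by (rule integrable_const_bound[where B=B]) (auto simp: assms)

lemma (in prob_space) char_fun_Re:
  assumes [measurable]: "X \<in> borel_measurable M"
  shows "Re (char_fun M X s) = (\<integral>w. cos (s \<bullet> X w) \<partial>M)"
    and "Im (char_fun M X s) = (\<integral>w. sin (s \<bullet> X w) \<partial>M)"
  unfolding char_fun_def
  by (subst integral_Re[symmetric] integral_Im[symmetric], rule integrable_cis, simp, simp)+

lemma (in prob_space) char_fun_norm:
  assumes [measurable]: "X \<in> borel_measurable M"
  shows "cmod (char_fun M X s) \<le> 1"
proof -
  have "cmod (char_fun M X s) \<le> (\<integral>w. cmod (cis (s \<bullet> X w)) \<partial>M)"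
    unfolding char_fun_def by (rule integral_norm_bound)
  also have "\<dots> = 1" by (simp add: prob_space)
  finally show ?thesis .
qed

lemma (in prob_space) char_var:
  assumes [measurable]: "X \<in> borel_measurable M"
  shows "(\<integral>w. (cmod (cis (s \<bullet> X w) - char_fun M X s))^2 \<partial>M) = 1 - (cmod (char_fun M X s))^2"
proof -
  define f where "f = char_fun M X s"
  have pt: "(cmod (cis (s \<bullet> X w) - f))^2 = 1 - 2 * Re f * cos (s \<bullet> X w) - 2 * Im f * sin (s \<bullet> X w) + (cmod f)^2" for w
  proof -
    have "(cmod (cis (s \<bullet> X w) - f))^2 = (cos (s \<bullet> X w) - Re f)^2 + (sin (s \<bullet> X w) - Im f)^2"
      by (simp add: cmod_power2)
    also have "\<dots> = (cos (s \<bullet> X w))^2 + (sin (s \<bullet> X w))^2 - 2 * Re f * cos (s \<bullet> X w) - 2 * Im f * sin (s \<bullet> X w) + ((Re f)^2 + (Im f)^2)"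
      by (simp add: power2_eq_square algebra_simps)
    also have "\<dots> = 1 - 2 * Re f * cos (s \<bullet> X w) - 2 * Im f * sin (s \<bullet> X w) + (cmod f)^2"
      by (simp add: cmod_power2)
    finally show ?thesis .
  qed
  have ic: "integrable M (\<lambda>w. cos (s \<bullet> X w))" by (rule integrable_bdd_real[where B=1]) auto
  have isn: "integrable M (\<lambda>w. sin (s \<bullet> X w))" by (rule integrable_bdd_real[where B=1]) auto
  have "(\<integral>w. (cmod (cis (s \<bullet> X w) - f))^2 \<partial>M) = (\<integral>w. 1 - 2 * Re f * cos (s \<bullet> X w) - 2 * Im f * sin (s \<bullet> X w) + (cmod f)^2 \<partial>M)"
    by (simp add: pt)
  also have "\<dots> = 1 - 2 * Re f * Re f - 2 * Im f * Im f + (cmod f)^2"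
    using ic isn by (simp add: prob_space char_fun_Re f_def)
  also have "\<dots> = 1 - (cmod f)^2" by (simp only: cmod_power2) (simp add: power2_eq_square)
  finally show ?thesis by (simp add: f_def)
qed

lemma (in prob_space) char_fun_distr_eq:
  assumes [measurable]: "X \<in> borel_measurable M" "X' \<in> borel_measurable M"
    and d: "distr M borel X = distr M borel X'"
  shows "char_fun M X' s = char_fun M X s"
proof -
  have "char_fun M X s = integral\<^sup>L (distr M borel X) (\<lambda>x. cis (s \<bullet> x))"
    unfolding char_fun_def by (subst integral_distr) auto
  also have "\<dots> = integral\<^sup>L (distr M borel X') (\<lambda>x. cis (s \<bullet> x))" by (simp add: d)
  also have "\<dots> = char_fun M X' s"
    unfolding char_fun_def by (subst integral_distr) auto
  finally show ?thesis by simp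
qed

lemma (in prob_space) char_iid:
  assumes [measurable]: "X \<in> borel_measurable M" "X' \<in> borel_measurable M"
    and ind: "indep_var borel X borel X'"
    and d: "distr M borel X = distr M borel X'"
  shows "(\<integral>w. 1 - cos (s \<bullet> (X w - X' w)) \<partial>M) = 1 - (cmod (char_fun M X s))^2"
proof -
  define f where "f = char_fun M X s"
  have f': "char_fun M X' s = f" using char_fun_distr_eq[OF assms(1,2) d] by (simp add: f_def)
  have ind2: "indep_var borel ((\<lambda>x. cis (s \<bullet> x)) \<circ> X) borel ((\<lambda>x. cnj (cis (s \<bullet> x))) \<circ> X')"
    by (rule indep_var_compose[OF ind]) (auto simp: cis_cnj)
  have "(CLINT w|M. cis (s \<bullet> X w) * cnj (cis (s \<bullet> X' w))) = (CLINT w|M. cis (s \<bullet> X w)) * (CLINT w|M. cnj (cis (s \<bullet> X' w)))"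
    by (rule indep_var_lebesgue_integral[OF ind2[unfolded comp_def]]) (auto intro!: integrable_cis)
  also have "\<dots> = f * cnj f" using f' by (simp add: f_def char_fun_def)
  finally have e1: "(CLINT w|M. cis (s \<bullet> X w) * cnj (cis (s \<bullet> X' w))) = f * cnj f" .
  have "(\<integral>w. cos (s \<bullet> (X w - X' w)) \<partial>M) = (\<integral>w. Re (cis (s \<bullet> X w) * cnj (cis (s \<bullet> X' w))) \<partial>M)"
    by (simp add: cis_cnj cis_mult inner_diff_right)
  also have "\<dots> = Re (CLINT w|M. cis (s \<bullet> X w) * cnj (cis (s \<bullet> X' w)))"
    by (rule integral_Re) (auto intro!: integrable_cis simp: cis_cnj cis_mult)
  also have "\<dots> = (cmod f)^2" using e1 by (simp only: cmod_power2) (simp add: power2_eq_square)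
  finally have e2: "(\<integral>w. cos (s \<bullet> (X w - X' w)) \<partial>M) = (cmod f)^2" .
  have "(\<integral>w. 1 - cos (s \<bullet> (X w - X' w)) \<partial>M) = 1 - (\<integral>w. cos (s \<bullet> (X w - X' w)) \<partial>M)"
  proof -
    have "integrable M (\<lambda>w. cos (s \<bullet> (X w - X' w)))" by (rule integrable_bdd_real[where B=1]) auto
    then show ?thesis by (subst Bochner_Integration.integral_diff) (auto simp: prob_space)
  qed
  then show ?thesis using e2 by (simp add: f_def)
qed


lemma (in prob_space) key_bound:
  assumes [measurable]: "X \<in> borel_measurable M" "Y \<in> borel_measurable M"
  shows "(cmod (char_fun2 M X Y s t - char_fun M X s * char_fun M Y t))^2
     \<le> (1 - (cmod (char_fun M X s))^2) * (1 - (cmod (char_fun M Y t))^2)"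
proof -
  define fx where "fx = char_fun M X s"
  define fy where "fy = char_fun M Y t"
  define A where "A w = cis (s \<bullet> X w) - fx" for w
  define B where "B w = cis (t \<bullet> Y w) - fy" for w
  have [measurable]: "A \<in> borel_measurable M" "B \<in> borel_measurable M" unfolding A_def B_def by auto
  have I1: "integrable M (\<lambda>w. cis (s \<bullet> X w + t \<bullet> Y w))" by (rule integrable_cis) auto
  have I2: "integrable M (\<lambda>w. cis (s \<bullet> X w))" by (rule integrable_cis) auto
  have I3: "integrable M (\<lambda>w. cis (t \<bullet> Y w))" by (rule integrable_cis) auto
  have pw: "A w * B w = cis (s \<bullet> X w + t \<bullet> Y w) - fy * cis (s \<bullet> X w) - fx * cis (t \<bullet> Y w) + fx * fy" for w
    by (simp add: A_def B_def cis_mult algebra_simps)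
  have "(CLINT w|M. A w * B w) = (CLINT w|M. cis (s \<bullet> X w + t \<bullet> Y w) - fy * cis (s \<bullet> X w) - fx * cis (t \<bullet> Y w) + fx * fy)"
    by (simp add: pw)
  also have "\<dots> = char_fun2 M X Y s t - fy * fx - fx * fy + fx * fy"
    using I1 I2 I3 by (simp add: prob_space char_fun2_def fx_def fy_def char_fun_def)
  finally have e: "(CLINT w|M. A w * B w) = char_fun2 M X Y s t - fx * fy" by simp
  have bA: "cmod (A w) \<le> 2" for w
  proof -
    have "cmod (A w) \<le> cmod (cis (s \<bullet> X w)) + cmod fx" unfolding A_def by (rule norm_triangle_ineq4)
    also have "\<dots> \<le> 2" using char_fun_norm[of X s] by (simp add: fx_def)
    finally show ?thesis .
  qed
  have bB: "cmod (B w) \<le> 2" for w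
  proof -
    have "cmod (B w) \<le> cmod (cis (t \<bullet> Y w)) + cmod fy" unfolding B_def by (rule norm_triangle_ineq4)
    also have "\<dots> \<le> 2" using char_fun_norm[of Y t] by (simp add: fy_def)
    finally show ?thesis .
  qed
  have iA: "integrable M (\<lambda>w. (cmod (A w))^2)"
    by (rule integrable_bdd_real[where B=4]) (use power_mono[OF bA norm_ge_zero, where n=2] in \<open>auto\<close>)
  have iB: "integrable M (\<lambda>w. (cmod (B w))^2)"
    by (rule integrable_bdd_real[where B=4]) (use power_mono[OF bB norm_ge_zero, where n=2] in \<open>auto\<close>)
  have iAB: "integrable M (\<lambda>w. cmod (A w) * cmod (B w))"
    by (rule integrable_bdd_real[where B=4]) (use mult_mono[OF bA bB] in \<open>auto simp: abs_mult\<close>)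
  have "cmod (CLINT w|M. A w * B w) \<le> (\<integral>w. cmod (A w * B w) \<partial>M)" by (rule integral_norm_bound)
  hence n1: "cmod (CLINT w|M. A w * B w) \<le> (\<integral>w. cmod (A w) * cmod (B w) \<partial>M)" by (simp add: norm_mult)
  have "(cmod (CLINT w|M. A w * B w))^2 \<le> (\<integral>w. cmod (A w) * cmod (B w) \<partial>M)^2"
    by (rule power_mono[OF n1]) simp
  also have "\<dots> \<le> (\<integral>w. (cmod (A w))^2 \<partial>M) * (\<integral>w. (cmod (B w))^2 \<partial>M)"
    by (rule cs_real[OF iA iB iAB])
  also have "\<dots> = (1 - (cmod fx)^2) * (1 - (cmod fy)^2)"
    unfolding A_def B_def fx_def fy_def by (simp add: char_var)
  finally show ?thesis using e by (simp add: fx_def fy_def)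
qed

lemma levy_sigma_finite:
  fixes \<mu> :: "'a::euclidean_space measure"
  assumes "sym_levy_full \<mu>"
  shows "sigma_finite_measure \<mu>"
proof
  have sets: "sets \<mu> = sets borel" and z: "emeasure \<mu> {0} = 0"
    and fin: "(\<integral>\<^sup>+ r. ennreal (min 1 (norm r ^ 2)) \<partial>\<mu>) < \<infinity>"
    using assms by (auto simp: sym_levy_full_def)
  have sp: "space \<mu> = UNIV" using sets_eq_imp_space_eq[OF sets] by simp
  define A where "A n = {r::'a. 1 / real (Suc n) < norm r}" for n
  have Ab: "A n \<in> sets \<mu>" for n
    unfolding sets A_def by (intro borel_open open_Collect_less) (auto intro!: continuous_intros)
  have Af: "emeasure \<mu> (A n) \<noteq> \<infinity>" for n
  proof
    assume inf: "emeasure \<mu> (A n) = \<infinity>"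
    define c where "c = 1 / (real (Suc n))^2"
    have cp: "c > 0" by (simp add: c_def)
    have "ennreal c * emeasure \<mu> (A n) = (\<integral>\<^sup>+ r. ennreal c * indicator (A n) r \<partial>\<mu>)"
      by (rule nn_integral_cmult_indicator[symmetric, OF Ab])
    also have "\<dots> \<le> (\<integral>\<^sup>+ r. ennreal (min 1 (norm r ^ 2)) \<partial>\<mu>)"
    proof (rule nn_integral_mono)
      fix r assume "r \<in> space \<mu>"
      show "ennreal c * indicator (A n) r \<le> ennreal (min 1 (norm r ^ 2))"
      proof (cases "r \<in> A n")
        case True
        hence lt: "1 / real (Suc n) < norm r" by (simp add: A_def)
        have "(1 / real (Suc n))^2 \<le> (norm r)^2"
          by (rule power_mono) (use lt in auto)
        moreover have "(1 / real (Suc n))^2 \<le> 1" by (simp add: power_le_one)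
        ultimately have "c \<le> min 1 (norm r ^ 2)" by (simp add: c_def power_divide)
        then show ?thesis using True by (simp add: ennreal_leI)
      qed simp
    qed
    finally have "ennreal c * emeasure \<mu> (A n) < \<infinity>" using fin by simp
    then show False using inf cp by (simp add: ennreal_mult_top)
  qed
  show "\<exists>F::'a set set. countable F \<and> F \<subseteq> sets \<mu> \<and> \<Union>F = space \<mu> \<and> (\<forall>a\<in>F. emeasure \<mu> a \<noteq> \<infinity>)"
  proof (intro exI[of _ "insert {0} (range A)"] conjI)
    show "countable (insert {0} (range A))" by simp
    show "insert {0} (range A) \<subseteq> sets \<mu>" using Ab by (auto simp: sets)
    show "\<Union> (insert {0} (range A)) = space \<mu>"
    proof -
      have "r \<in> \<Union> (insert {0} (range A))" for r :: 'a
      proof (cases "r = 0")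
        case False
        then obtain n where "inverse (real (Suc n)) < norm r" using reals_Archimedean[of "norm r"] by auto
        then show ?thesis by (auto simp: A_def field_simps)
      qed simp
      then show ?thesis using sp by auto
    qed
    show "\<forall>a\<in>insert {0} (range A). emeasure \<mu> a \<noteq> \<infinity>" using Af z by auto
  qed
qed

lemma cos_sub_bound: "1 - cos (a - b) \<le> 2 * (1 - cos a) + 2 * (1 - cos (b::real))"
proof -
  have e: "cos (a - b) = cos a * cos b + sin a * sin b" by (simp add: cos_diff)
  have s1: "sin a * sin a + cos a * cos a = 1" and s2: "sin b * sin b + cos b * cos b = 1"
    using sin_cos_squared_add[of a] sin_cos_squared_add[of b] by (simp_all add: power2_eq_square)
  have z: "0 \<le> ((cos a - 1) + (cos b - 1))^2 + (sin a + sin b)^2" by simp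
  have "((cos a - 1) + (cos b - 1))^2 + (sin a + sin b)^2 = (sin a * sin a + cos a * cos a) + (sin b * sin b + cos b * cos b) + 4 + 2 * (cos a * cos b + sin a * sin b) - 4 * cos a - 4 * cos b"
    by algebra
  then show ?thesis unfolding e using z s1 s2 by (smt (verit))
qed

lemma levy_fn_meas:
  fixes \<mu> :: "'a::euclidean_space measure"
  assumes "sigma_finite_measure \<mu>" and sets: "sets \<mu> = sets borel"
  shows "levy_fn \<mu> \<in> borel_measurable borel"
proof -
  interpret sigma_finite_measure \<mu> by fact
  have [measurable_cong]: "sets \<mu> = sets borel" by (rule sets)
  show ?thesis unfolding levy_fn_def
    by (rule borel_measurable_nn_integral) measurable
qed

lemma levy_sub:
  fixes \<mu> :: "'a::euclidean_space measure"
  assumes sets: "sets \<mu> = sets borel"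
  shows "levy_fn \<mu> (x - y) \<le> 2 * levy_fn \<mu> x + 2 * levy_fn \<mu> y"
proof -
  have [measurable_cong]: "sets \<mu> = sets borel" by (rule sets)
  have "levy_fn \<mu> (x - y) \<le> (\<integral>\<^sup>+ s. 2 * ennreal (1 - cos (x \<bullet> s)) + 2 * ennreal (1 - cos (y \<bullet> s)) \<partial>\<mu>)"
    unfolding levy_fn_def
  proof (rule nn_integral_mono)
    fix s
    have "1 - cos ((x - y) \<bullet> s) \<le> 2 * (1 - cos (x \<bullet> s)) + 2 * (1 - cos (y \<bullet> s))"
      using cos_sub_bound[of "x \<bullet> s" "y \<bullet> s"] by (simp add: inner_diff_left)
    then have "ennreal (1 - cos ((x - y) \<bullet> s)) \<le> ennreal (2 * (1 - cos (x \<bullet> s)) + 2 * (1 - cos (y \<bullet> s)))"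
      by (rule ennreal_leI)
    also have "\<dots> = 2 * ennreal (1 - cos (x \<bullet> s)) + 2 * ennreal (1 - cos (y \<bullet> s))"
    proof -
      have h1: "0 \<le> 1 - cos (x \<bullet> s)" and h2: "0 \<le> 1 - cos (y \<bullet> s)" by simp_all
      have "ennreal (2 * (1 - cos (x \<bullet> s)) + 2 * (1 - cos (y \<bullet> s))) = ennreal (2 * (1 - cos (x \<bullet> s))) + ennreal (2 * (1 - cos (y \<bullet> s)))"
        by (rule ennreal_plus) (use h1 h2 in auto)
      also have "\<dots> = 2 * ennreal (1 - cos (x \<bullet> s)) + 2 * ennreal (1 - cos (y \<bullet> s))"
        using h1 h2 by (subst (1 2) ennreal_mult) simp_all
      finally show ?thesis .
    qed
    finally show "ennreal (1 - cos ((x - y) \<bullet> s)) \<le> 2 * ennreal (1 - cos (x \<bullet> s)) + 2 * ennreal (1 - cos (y \<bullet> s))" .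
  qed
  also have "\<dots> = 2 * levy_fn \<mu> x + 2 * levy_fn \<mu> y"
    unfolding levy_fn_def by (simp add: nn_integral_add nn_integral_cmult)
  finally show ?thesis .
qed

lemma first_part:
  fixes M :: "'w measure"
    and X X' :: "'w \<Rightarrow> 'a::euclidean_space"
    and \<mu> :: "'a measure"
  assumes "prob_space M"
    and [measurable]: "X \<in> borel_measurable M" "X' \<in> borel_measurable M"
    and "prob_space.indep_var M borel X borel X'"
    and "distr M borel X = distr M borel X'"
    and "sym_levy_full \<mu>"
  shows "(\<integral>\<^sup>+ s. ennreal (1 - (cmod (char_fun M X s))^2) \<partial>\<mu>) = (\<integral>\<^sup>+ w. levy_fn \<mu> (X w - X' w) \<partial>M)"
proof -
  interpret P: prob_space M by fact
  have sf: "sigma_finite_measure \<mu>" by (rule levy_sigma_finite) fact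
  have sets: "sets \<mu> = sets borel" using assms(6) by (simp add: sym_levy_full_def)
  have [measurable_cong]: "sets \<mu> = sets borel" by (rule sets)
  interpret PS: pair_sigma_finite \<mu> M
    by (intro pair_sigma_finite.intro sf prob_space_imp_sigma_finite assms(1))
  have "(\<integral>\<^sup>+ s. ennreal (1 - (cmod (char_fun M X s))^2) \<partial>\<mu>)
      = (\<integral>\<^sup>+ s. (\<integral>\<^sup>+ w. ennreal (1 - cos (s \<bullet> (X w - X' w))) \<partial>M) \<partial>\<mu>)"
  proof (rule nn_integral_cong)
    fix s
    have "ennreal (1 - (cmod (char_fun M X s))^2) = ennreal (\<integral>w. 1 - cos (s \<bullet> (X w - X' w)) \<partial>M)"
      using P.char_iid[OF assms(2,3,4,5)] by simp
    also have "\<dots> = (\<integral>\<^sup>+ w. ennreal (1 - cos (s \<bullet> (X w - X' w))) \<partial>M)"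
      by (rule nn_integral_eq_integral[symmetric]) (auto intro!: P.integrable_bdd_real[where B=2])
    finally show "ennreal (1 - (cmod (char_fun M X s))^2) = (\<integral>\<^sup>+ w. ennreal (1 - cos (s \<bullet> (X w - X' w))) \<partial>M)" .
  qed
  also have "\<dots> = (\<integral>\<^sup>+ w. (\<integral>\<^sup>+ s. ennreal (1 - cos (s \<bullet> (X w - X' w))) \<partial>\<mu>) \<partial>M)"
    by (rule PS.Fubini'[symmetric]) measurable
  also have "\<dots> = (\<integral>\<^sup>+ w. levy_fn \<mu> (X w - X' w) \<partial>M)"
    unfolding levy_fn_def by (simp add: inner_commute)
  finally show ?thesis .
qed

lemma second_part:
  fixes M :: "'w measure"
    and X X' :: "'w \<Rightarrow> 'a::euclidean_space"
    and \<mu> :: "'a measure"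
  assumes "prob_space M"
    and [measurable]: "X \<in> borel_measurable M" "X' \<in> borel_measurable M"
    and d: "distr M borel X = distr M borel X'"
    and "sym_levy_full \<mu>"
  shows "(\<integral>\<^sup>+ w. levy_fn \<mu> (X w - X' w) \<partial>M) \<le> 4 * (\<integral>\<^sup>+ w. levy_fn \<mu> (X w) \<partial>M)"
proof -
  have sf: "sigma_finite_measure \<mu>" by (rule levy_sigma_finite) fact
  have sets: "sets \<mu> = sets borel" using assms(5) by (simp add: sym_levy_full_def)
  have [measurable]: "levy_fn \<mu> \<in> borel_measurable borel" by (rule levy_fn_meas[OF sf sets])
  have "(\<integral>\<^sup>+ w. levy_fn \<mu> (X w - X' w) \<partial>M) \<le> (\<integral>\<^sup>+ w. 2 * levy_fn \<mu> (X w) + 2 * levy_fn \<mu> (X' w) \<partial>M)"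
    by (rule nn_integral_mono) (rule levy_sub[OF sets])
  also have "\<dots> = 2 * (\<integral>\<^sup>+ w. levy_fn \<mu> (X w) \<partial>M) + 2 * (\<integral>\<^sup>+ w. levy_fn \<mu> (X' w) \<partial>M)"
    by (simp add: nn_integral_add nn_integral_cmult)
  also have "(\<integral>\<^sup>+ w. levy_fn \<mu> (X' w) \<partial>M) = (\<integral>\<^sup>+ w. levy_fn \<mu> (X w) \<partial>M)"
  proof -
    have "(\<integral>\<^sup>+ w. levy_fn \<mu> (X' w) \<partial>M) = integral\<^sup>N (distr M borel X') (levy_fn \<mu>)"
      by (subst nn_integral_distr) auto
    also have "\<dots> = integral\<^sup>N (distr M borel X) (levy_fn \<mu>)" by (simp add: d)
    also have "\<dots> = (\<integral>\<^sup>+ w. levy_fn \<mu> (X w) \<partial>M)"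
      by (subst nn_integral_distr) auto
    finally show ?thesis .
  qed
  also have "2 * (\<integral>\<^sup>+ w. levy_fn \<mu> (X w) \<partial>M) + 2 * (\<integral>\<^sup>+ w. levy_fn \<mu> (X w) \<partial>M) = 4 * (\<integral>\<^sup>+ w. levy_fn \<mu> (X w) \<partial>M)"
    by (simp add: distrib_right[symmetric])
  finally show ?thesis .
qed

theorem lemma3p6:
  fixes M :: "'w measure"
    and X X' :: "'w \<Rightarrow> 'a::euclidean_space"
    and Y Y' :: "'w \<Rightarrow> 'b::euclidean_space"
    and \<mu> :: "'a measure" and \<nu> :: "'b measure"
  assumes "prob_space M"
    and "X \<in> borel_measurable M" and "X' \<in> borel_measurable M"
    and "Y \<in> borel_measurable M" and "Y' \<in> borel_measurable M"
    and "prob_space.indep_var M borel X borel X'"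
    and "distr M borel X = distr M borel X'"
    and "prob_space.indep_var M borel Y borel Y'"
    and "distr M borel Y = distr M borel Y'"
    and "sym_levy_full \<mu>" and "sym_levy_full \<nu>"
  shows "dcov2 M \<mu> \<nu> X Y
           \<le> (\<integral>\<^sup>+ w. levy_fn \<mu> (X w - X' w) \<partial>M) * (\<integral>\<^sup>+ w. levy_fn \<nu> (Y w - Y' w) \<partial>M)
         \<and> (\<integral>\<^sup>+ w. levy_fn \<mu> (X w - X' w) \<partial>M) * (\<integral>\<^sup>+ w. levy_fn \<nu> (Y w - Y' w) \<partial>M)
           \<le> 16 * ((\<integral>\<^sup>+ w. levy_fn \<mu> (X w) \<partial>M) * (\<integral>\<^sup>+ w. levy_fn \<nu> (Y w) \<partial>M))"
proof
  interpret P: prob_space M by fact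
  have [measurable]: "X \<in> borel_measurable M" "Y \<in> borel_measurable M" using assms by auto
  have smu: "sets \<mu> = sets borel" using assms(10) by (simp add: sym_levy_full_def)
  have snu: "sets \<nu> = sets borel" using assms(11) by (simp add: sym_levy_full_def)
  have [measurable_cong]: "sets \<mu> = sets borel" "sets \<nu> = sets borel" by (rule smu, rule snu)
  define ax where "ax s = 1 - (cmod (char_fun M X s))^2" for s
  define ay where "ay t = 1 - (cmod (char_fun M Y t))^2" for t
  have ax0: "0 \<le> ax s" for s
    using P.char_fun_norm[of X s] unfolding ax_def by (simp add: power_le_one abs_le_iff)
  have ay0: "0 \<le> ay t" for t
    using P.char_fun_norm[of Y t] unfolding ay_def by (simp add: power_le_one abs_le_iff)
  have max: "(\<lambda>s. ennreal (ax s)) \<in> borel_measurable \<mu>"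
    unfolding ax_def char_fun_def by measurable
  have may: "(\<lambda>t. ennreal (ay t)) \<in> borel_measurable \<nu>"
    unfolding ay_def char_fun_def by measurable
  have "dcov2 M \<mu> \<nu> X Y \<le> (\<integral>\<^sup>+ s. (\<integral>\<^sup>+ t. ennreal (ax s) * ennreal (ay t) \<partial>\<nu>) \<partial>\<mu>)"
    unfolding dcov2_def
  proof (intro nn_integral_mono)
    fix s t
    show "ennreal ((cmod (char_fun2 M X Y s t - char_fun M X s * char_fun M Y t))\<^sup>2) \<le> ennreal (ax s) * ennreal (ay t)"
      using P.key_bound[of X Y s t] ax0[of s] ay0[of t]
      by (simp add: ennreal_mult[symmetric] ennreal_leI ax_def ay_def)
  qed
  also have "\<dots> = (\<integral>\<^sup>+ s. ennreal (ax s) \<partial>\<mu>) * (\<integral>\<^sup>+ t. ennreal (ay t) \<partial>\<nu>)"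
    using max may by (simp add: nn_integral_cmult nn_integral_multc)
  also have "(\<integral>\<^sup>+ s. ennreal (ax s) \<partial>\<mu>) = (\<integral>\<^sup>+ w. levy_fn \<mu> (X w - X' w) \<partial>M)"
    unfolding ax_def by (rule first_part) (use assms in auto)
  also have "(\<integral>\<^sup>+ t. ennreal (ay t) \<partial>\<nu>) = (\<integral>\<^sup>+ w. levy_fn \<nu> (Y w - Y' w) \<partial>M)"
    unfolding ay_def by (rule first_part) (use assms in auto)
  finally show "dcov2 M \<mu> \<nu> X Y
           \<le> (\<integral>\<^sup>+ w. levy_fn \<mu> (X w - X' w) \<partial>M) * (\<integral>\<^sup>+ w. levy_fn \<nu> (Y w - Y' w) \<partial>M)" .
next
  have a: "(\<integral>\<^sup>+ w. levy_fn \<mu> (X w - X' w) \<partial>M) \<le> 4 * (\<integral>\<^sup>+ w. levy_fn \<mu> (X w) \<partial>M)"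
    by (rule second_part) (use assms in auto)
  have b: "(\<integral>\<^sup>+ w. levy_fn \<nu> (Y w - Y' w) \<partial>M) \<le> 4 * (\<integral>\<^sup>+ w. levy_fn \<nu> (Y w) \<partial>M)"
    by (rule second_part) (use assms in auto)
  have "(\<integral>\<^sup>+ w. levy_fn \<mu> (X w - X' w) \<partial>M) * (\<integral>\<^sup>+ w. levy_fn \<nu> (Y w - Y' w) \<partial>M)
      \<le> (4 * (\<integral>\<^sup>+ w. levy_fn \<mu> (X w) \<partial>M)) * (4 * (\<integral>\<^sup>+ w. levy_fn \<nu> (Y w) \<partial>M))"
    by (rule mult_mono[OF a b]) auto
  also have "\<dots> = 16 * ((\<integral>\<^sup>+ w. levy_fn \<mu> (X w) \<partial>M) * (\<integral>\<^sup>+ w. levy_fn \<nu> (Y w) \<partial>M))"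
    by (simp add: mult_ac)
  finally show "(\<integral>\<^sup>+ w. levy_fn \<mu> (X w - X' w) \<partial>M) * (\<integral>\<^sup>+ w. levy_fn \<nu> (Y w - Y' w) \<partial>M)
           \<le> 16 * ((\<integral>\<^sup>+ w. levy_fn \<mu> (X w) \<partial>M) * (\<integral>\<^sup>+ w. levy_fn \<nu> (Y w) \<partial>M))" .
qed

end
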